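(* In the setting described in the context, \[ \mathbb{E}\bigg[\mathbf{1}\{\omega(n_{<x})=r\}\max_{y\in\mathcal{Y}}\Big(\frac{\tau(n_{<y})}{\operatorname{Log} y}\mathbf{1}\{\neg E_y\}\Big)\bigg]\ll \frac{1}{(\operatorname{Log}_2 x)^{9}}. \]
   Context: Notation: $\operatorname{Log} x\coloneqq\max\{1,\log x\}$, $\operatorname{Log}_2 x\coloneqq\operatorname{Log}(\operatorname{Log} x)$, $\operatorname{Log}_3 x\coloneqq\operatorname{Log}(\operatorname{Log}_2 x)$; $\omega(n)$ = number of distinct prime factors, $\tau(n)$ = number of divisors. Random model: for each prime $p$, $n_p$ equals $1$ with probability $\frac{p}{p+1}$ and $p$ with probability $\frac1{p+1}$, independently over $p$; $n_{<z}\coloneqq\prod_{p<z}n_p$. Setting: $\varepsilon>0$ is fixed, $x$ is sufficiently large in terms of $\varepsilon$, $r$ is an integer with $(1+\varepsilon)\operatorname{Log}_2 x\le r\le(2-\varepsilon)\operatorname{Log}_2 x$, and $\alpha$ is defined by $r=(1+\alpha)\operatorname{Log}_2 x$ (so $\varepsilon\le\alpha\le1-\varepsilon$). Let $\mathcal{Y}\coloneqq\{y>0: |\operatorname{Log}_2 y-\alpha\operatorname{Log}_2 x|\le\sqrt{\operatorname{Log}_2 x},\ \operatorname{Log}_2 y/\log 2\in\mathbb{Z}\}$. For $y\in\mathcal{Y}$, $E_y$ is the event $\log n_{<y}\le 10(\operatorname{Log}_3 x)\operatorname{Log} y$, and $\neg E_y$ its complement. Implied constants may depend on $\varepsilon$.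 *)

theory Defs
  imports "HOL-Probability.Probability" "HOL-Computational_Algebra.Primes"
begin

definition Log :: "real \<Rightarrow> real" where
  "Log x = max 1 (ln x)"

definition Log2 :: "real \<Rightarrow> real" where
  "Log2 x = Log (Log x)"

definition Log3 :: "real \<Rightarrow> real" where
  "Log3 x = Log (Log2 x)"

definition omega :: "nat \<Rightarrow> nat" where
  "omega n = card (prime_factors n)"

definition tau :: "nat \<Rightarrow> nat" where
  "tau n = card {d. d dvd n}"

definition np_pmf :: "nat \<Rightarrow> nat pmf" where
  "np_pmf p = map_pmf (\<lambda>b. if b then p else 1) (bernoulli_pmf (1 / (real p + 1)))"

definition rand_model :: "(nat \<Rightarrow> nat) measure" where
  "rand_model = (\<Pi>\<^sub>M p\<in>{p. prime p}. measure_pmf (np_pmf p))"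

definition n_below :: "(nat \<Rightarrow> nat) \<Rightarrow> real \<Rightarrow> nat" where
  "n_below w z = (\<Prod>p\<in>{p. prime p \<and> real p < z}. w p)"

definition Yset :: "real \<Rightarrow> real \<Rightarrow> real set" where
  "Yset x \<alpha> = {y. y > 0 \<and> \<bar>Log2 y - \<alpha> * Log2 x\<bar> \<le> sqrt (Log2 x)
                   \<and> Log2 y / ln 2 \<in> \<int>}"

definition E_event :: "real \<Rightarrow> real \<Rightarrow> (nat \<Rightarrow> nat) \<Rightarrow> bool" where
  "E_event x y w \<longleftrightarrow> ln (real (n_below w y)) \<le> 10 * Log3 x * Log y"

end

theory Submission
  imports Defs
begin

lemma ln_sum_bound:
  fixes m :: nat
  assumes "m > 0" "A \<subseteq> {p. prime p}" "finite A" "\<And>p. p \<in> A \<Longrightarrow> p ^ e p dvd m"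
  shows "(\<Sum>p\<in>A. real (e p) * ln (real p)) \<le> ln (real m)"
proof -
  let ?g = "\<lambda>p. real (multiplicity p m) * ln (real p)"
  have lnm: "ln (real m) = (\<Sum>p\<in>prime_factors m. ?g p)"
  proof -
    have "real m = real (\<Prod>p \<in> prime_factors m. p ^ multiplicity p m)"
      using prime_factorization_nat[OF assms(1)] by simp
    also have "\<dots> = (\<Prod>p \<in> prime_factors m. real p ^ multiplicity p m)" by simp
    finally have "ln (real m) = ln (\<Prod>p \<in> prime_factors m. real p ^ multiplicity p m)" by simp
    also have "\<dots> = (\<Sum>p\<in>prime_factors m. ln (real p ^ multiplicity p m))"
      by (rule ln_prod) (auto dest: in_prime_factors_imp_prime simp: prime_gt_0_nat)
    also have "\<dots> = (\<Sum>p\<in>prime_factors m. ?g p)"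
      by (intro sum.cong refl, subst ln_realpow) (auto dest!: in_prime_factors_imp_prime simp: prime_gt_0_nat)
    finally show ?thesis .
  qed
  have gnn: "\<And>p. p \<in> A \<union> prime_factors m \<Longrightarrow> ?g p \<ge> 0"
    using assms(2) by (auto intro!: mult_nonneg_nonneg ln_ge_zero dest!: in_prime_factors_imp_prime simp: Suc_le_eq prime_gt_0_nat)
  have "(\<Sum>p\<in>A. real (e p) * ln (real p)) \<le> (\<Sum>p\<in>A. ?g p)"
  proof (rule sum_mono)
    fix p assume p: "p \<in> A"
    have "e p \<le> multiplicity p m" using assms(1,2) assms(4)[OF p] p by (intro multiplicity_geI) auto
    moreover have "ln (real p) \<ge> 0"
    proof -
      have "prime p" using assms(2) p by auto
      then have "real p \<ge> 1" using prime_ge_1_nat by auto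
      then show ?thesis by simp
    qed
    ultimately show "real (e p) * ln (real p) \<le> ?g p" by (intro mult_right_mono) auto
  qed
  also have "\<dots> \<le> (\<Sum>p\<in>A \<union> prime_factors m. ?g p)"
    by (rule sum_mono2) (use assms(3) gnn in auto)
  also have "\<dots> = (\<Sum>p\<in>prime_factors m. ?g p)"
  proof (rule sum.mono_neutral_right)
    show "finite (A \<union> prime_factors m)" using assms(3) by simp
    show "prime_factors m \<subseteq> A \<union> prime_factors m" by auto
    show "\<forall>i\<in>A \<union> prime_factors m - prime_factors m. ?g i = 0"
    proof
      fix i assume i: "i \<in> A \<union> prime_factors m - prime_factors m"
      then have "prime i" "i \<notin> prime_factors m" using assms(2) by auto
      then have "multiplicity i m = 0" using assms(1) by (simp add: prime_factors_multiplicity)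
      then show "?g i = 0" by simp
    qed
  qed
  finally show ?thesis using lnm by simp
qed

definition theta :: "nat \<Rightarrow> real" where
  "theta n = (\<Sum>p\<in>{p. prime p \<and> p \<le> n}. ln (real p))"

lemma theta_mono: "m \<le> n \<Longrightarrow> theta m \<le> theta n"
  unfolding theta_def by (rule sum_mono2) (auto simp: prime_ge_1_nat)

lemma theta_double: "theta (2*m) \<le> theta m + 2 * real m * ln 2"
proof -
  let ?A = "{p. prime p \<and> m < p \<and> p \<le> 2*m}"
  have split: "{p. prime p \<and> p \<le> 2*m} = {p. prime p \<and> p \<le> m} \<union> ?A" by auto
  have "theta (2*m) = theta m + (\<Sum>p\<in>?A. ln (real p))"
    unfolding theta_def split by (subst sum.union_disjoint) auto
  moreover have "(\<Sum>p\<in>?A. ln (real p)) \<le> 2 * real m * ln 2"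
  proof -
    have dv: "p dvd (2*m choose m)" if "p \<in> ?A" for p
    proof -
      from that have pp: "prime p" "m < p" "p \<le> 2*m" by auto
      have "fact m * fact m * (2*m choose m) = (fact (2*m) :: nat)"
        using binomial_fact_lemma[of m "2*m"] by (simp add: mult_2)
      moreover have "p dvd fact (2*m)" using pp prime_dvd_fact_iff by blast
      ultimately have "p dvd fact m * fact m * (2*m choose m)" by simp
      moreover have "\<not> p dvd fact m" using pp prime_dvd_fact_iff by auto
      ultimately show ?thesis using pp(1) by (simp add: prime_dvd_mult_iff)
    qed
    have pos: "(2*m choose m) > 0" by simp
    have "(\<Sum>p\<in>?A. real 1 * ln (real p)) \<le> ln (real (2*m choose m))"
      by (rule ln_sum_bound[OF pos]) (use dv in auto)
    also have "\<dots> \<le> ln (2 ^ (2*m))"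
      using binomial_le_pow2[of "2*m" m] pos
      by (subst ln_le_cancel_iff) (auto simp del: of_nat_power simp add: of_nat_power[symmetric])
    also have "\<dots> = 2 * real m * ln 2" by (simp add: ln_realpow)
    finally show ?thesis by simp
  qed
  ultimately show ?thesis by simp
qed

lemma theta_bound: "theta n \<le> 4 * ln 2 * real n"
proof (induction n rule: less_induct)
  case (less n)
  show ?case
  proof (cases "n \<le> 2")
    case True
    then have "theta n \<le> theta 2" by (rule theta_mono)
    also have "theta 2 = ln 2"
    proof -
      have "{p. prime p \<and> p \<le> (2::nat)} = {2}"
      proof (intro equalityI subsetI)
        fix p assume "p \<in> {p. prime p \<and> p \<le> (2::nat)}"
        then have "p \<ge> 2" "p \<le> 2" by (auto simp: prime_ge_2_nat)
        then show "p \<in> {2}" by simp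
      qed simp
      then show ?thesis by (simp add: theta_def)
    qed
    finally have t2: "theta n \<le> ln 2" .
    have z: "theta n = 0" if "n < 2"
    proof -
      have e: "{p. prime p \<and> p \<le> n} = {}" using that by (auto dest: prime_ge_2_nat)
      show ?thesis unfolding theta_def e by simp
    qed
    have l2: "ln (2::real) > 0" by simp
    show ?thesis
    proof (cases "n < 2")
      case True
      then show ?thesis using z l2 by simp
    next
      case False
      then have n2: "n = 2" using \<open>n \<le> 2\<close> by simp
      have "theta n \<le> 4 * ln 2 * 2" using t2 l2 by linarith
      then show ?thesis using n2 by simp
    qed
  next
    case False
    define m where "m = n div 2"
    have m: "n = 2*m \<or> n = 2*m+1" unfolding m_def by presburger
    then show ?thesis
    proof
      assume n: "n = 2*m"
      with False have "m < n" by auto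
      have "theta n \<le> theta m + 2 * real m * ln 2" using n theta_double by simp
      also have "\<dots> \<le> 4 * ln 2 * real m + 2 * real m * ln 2" using less[OF \<open>m < n\<close>] by (simp add: algebra_simps)
      also have "\<dots> \<le> 4 * ln 2 * real n" using n by simp
      finally show ?thesis .
    next
      assume n: "n = 2*m+1"
      with False have "m + 1 < n" "m \<ge> 1" by auto
      have "theta n \<le> theta (2*(m+1))" using n by (intro theta_mono) auto
      also have "\<dots> \<le> theta (m+1) + 2 * real (m+1) * ln 2" by (rule theta_double)
      also have "\<dots> \<le> 4 * ln 2 * real (m+1) + 2 * real (m+1) * ln 2" using less[OF \<open>m+1 < n\<close>] by simp
      also have "\<dots> \<le> 4 * ln 2 * real n" using n \<open>m \<ge> 1\<close> by (simp add: algebra_simps)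
      finally show ?thesis .
    qed
  qed
qed


lemma pow_div_dvd_fact:
  fixes p n :: nat assumes "prime p" shows "p ^ (n div p) dvd fact n"
proof (induction n)
  case 0 then show ?case by simp
next
  case (Suc n)
  show ?case
  proof (cases "Suc n mod p = 0")
    case True
    then have e: "Suc n div p = Suc (n div p)" by (simp add: div_Suc)
    have "p dvd Suc n" using True by (simp add: mod_0_imp_dvd)
    then have "p * p ^ (n div p) dvd Suc n * fact n" using Suc.IH by (rule mult_dvd_mono)
    then show ?thesis by (simp add: e fact_Suc)
  next
    case False
    then have e: "Suc n div p = n div p" by (simp add: div_Suc)
    have "fact n dvd (fact (Suc n) :: nat)" by (simp add: fact_dvd)
    then show ?thesis using Suc.IH e dvd_trans by metis
  qed
qed

definition Smert :: "nat \<Rightarrow> real" where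
  "Smert n = (\<Sum>k\<le>n. if prime k then ln (real k) / real k else 0)"
definition Hmert :: "nat \<Rightarrow> real" where
  "Hmert n = (\<Sum>k\<le>n. if prime k then 1 / real k else 0)"

lemma sum_primes_eq:
  fixes n :: nat shows "(\<Sum>k\<le>n. if prime k then f k else 0) = (\<Sum>p\<in>{p. prime p \<and> p \<le> n}. f p)"
proof -
  have e: "{p. prime p \<and> p \<le> n} = {k\<in>{..n}. prime k}" by auto
  have "(\<Sum>k\<le>n. if prime k then f k else 0) = sum f {k\<in>{..n}. prime k}"
    using sum.inter_filter[of "{..n}" f prime] by simp
  then show ?thesis by (simp only: e)
qed

lemma Smert_bound:
  assumes "n \<ge> 1" shows "Smert n \<le> ln (real n) + 4 * ln 2"
proof -
  let ?A = "{p. prime p \<and> p \<le> n}"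
  have fin: "finite ?A" by (rule finite_subset[of _ "{..n}"]) auto
  have pos: "fact n > (0::nat)" by simp
  have "(\<Sum>p\<in>?A. real (n div p) * ln (real p)) \<le> ln (real (fact n))"
    by (rule ln_sum_bound[OF pos]) (auto simp: pow_div_dvd_fact fin)
  also have "\<dots> \<le> ln (real (n ^ n))"
  proof -
    have "fact n \<le> (n ^ n :: nat)" using fact_le_power[where 'a=nat, of n] by simp
    then have "real (fact n) \<le> real (n ^ n)" by linarith
    then show ?thesis using pos by (subst ln_le_cancel_iff) auto
  qed
  also have "\<dots> = real n * ln (real n)" by (simp add: ln_realpow)
  finally have up: "(\<Sum>p\<in>?A. real (n div p) * ln (real p)) \<le> real n * ln (real n)" .
  have low: "(\<Sum>p\<in>?A. (real n / real p - 1) * ln (real p)) \<le> (\<Sum>p\<in>?A. real (n div p) * ln (real p))"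
  proof (rule sum_mono)
    fix p assume "p \<in> ?A"
    then have pp: "prime p" by auto
    then have p0: "real p > 0" by (simp add: prime_gt_0_nat)
    have "real p \<ge> 1" using pp prime_ge_1_nat by auto
    then have lp: "ln (real p) \<ge> 0" by simp
    have "n = p * (n div p) + n mod p" by simp
    then have "real n = real p * real (n div p) + real (n mod p)" by (metis of_nat_add of_nat_mult)
    moreover have "real (n mod p) < real p" using p0 by simp
    ultimately have "real n < real p * (real (n div p) + 1)" by (simp add: algebra_simps)
    then have "real n / real p < real (n div p) + 1" using p0 by (simp add: field_simps)
    then have "real n / real p - 1 \<le> real (n div p)" by simp
    then show "(real n / real p - 1) * ln (real p) \<le> real (n div p) * ln (real p)"
      using lp by (rule mult_right_mono)
  qed
  have eq: "(\<Sum>p\<in>?A. (real n / real p - 1) * ln (real p)) = real n * Smert n - theta n"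
    unfolding Smert_def sum_primes_eq theta_def
    by (simp add: sum_subtractf sum_distrib_left left_diff_distrib)
  have "real n * Smert n \<le> real n * ln (real n) + real n * (4 * ln 2)"
    using up low eq theta_bound[of n] by (simp add: algebra_simps)
  then have "real n * Smert n \<le> real n * (ln (real n) + 4 * ln 2)" by (simp add: algebra_simps)
  then show ?thesis using assms by (simp add: mult_le_cancel_left)
qed

lemma Smert_nonneg: "Smert n \<ge> 0"
  unfolding Smert_def by (rule sum_nonneg) (auto simp: prime_ge_1_nat Suc_le_eq prime_gt_0_nat)

lemma Hmert_aux:
  assumes "N \<ge> 2"
  shows "Hmert N \<le> Smert N / ln (real N) + ln (ln (real N)) - ln (ln 2)
                    + 4 * ln 2 * (1 / ln 2 - 1 / ln (real N))"
  using assms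
proof (induction N rule: nat_induct_at_least)
  case base
  have e: "{..(2::nat)} = {0,1,2}" by auto
  have h: "Hmert 2 = 1/2" by (simp add: Hmert_def e)
  have s0: "Smert 2 = ln 2 / 2" by (simp add: Smert_def e)
  have l2: "ln (2::real) > 0" by simp
  have s: "Smert 2 / ln 2 = 1/2" using s0 l2 by simp
  have "Hmert 2 \<le> Smert 2 / ln 2" using h s by linarith
  then show ?case by simp
next
  case (Suc N)
  define L where "L = ln (real N)"
  define L' where "L' = ln (real (Suc N))"
  have L0: "L > 0" using Suc.hyps by (simp add: L_def)
  have LL: "L < L'" using Suc.hyps by (simp add: L_def L'_def)
  define a where "a = (if prime (Suc N) then ln (real (Suc N)) / real (Suc N) else 0)"
  have S': "Smert (Suc N) = Smert N + a" by (simp add: Smert_def a_def)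
  have H': "Hmert (Suc N) = Hmert N + a / L'"
  proof -
    have "(if prime (Suc N) then 1 / real (Suc N) else 0) = a / L'"
      using L0 LL by (simp add: a_def L'_def)
    then show ?thesis by (simp add: Hmert_def)
  qed
  define d where "d = 1/L - 1/L'"
  have d0: "d \<ge> 0" using L0 LL by (simp add: d_def frac_le)
  have Sb: "Smert N \<le> L + 4 * ln 2" using Smert_bound[of N] Suc.hyps by (simp add: L_def)
  have key: "L * d \<le> ln L' - ln L"
  proof -
    have e1: "L * d = 1 - L/L'" using L0 LL by (simp add: d_def field_simps)
    have "ln (L/L') \<le> L/L' - 1" by (rule ln_le_minus_one) (use L0 LL in simp)
    moreover have "ln (L/L') = ln L - ln L'" using L0 LL by (simp add: ln_div)
    ultimately show ?thesis using e1 by simp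
  qed
  have "Smert N * d \<le> (L + 4 * ln 2) * d" by (rule mult_right_mono[OF Sb d0])
  then have step: "Smert N * d \<le> ln L' - ln L + 4 * ln 2 * d" using key by (simp add: algebra_simps)
  have e2: "Smert N / L = Smert N / L' + Smert N * d" by (simp add: d_def algebra_simps)
  have e3: "Smert (Suc N) / L' = Smert N / L' + a / L'" using S' by (simp add: add_divide_distrib)
  have IH: "Hmert N \<le> Smert N / L + ln L - ln (ln 2) + 4 * ln 2 * (1 / ln 2 - 1 / L)"
    using Suc.IH unfolding L_def .
  have e4: "4*ln 2*(1/ln 2 - 1/L') = 4*ln 2*(1/ln 2 - 1/L) + 4*ln 2*d"
    by (simp add: d_def algebra_simps)
  have "Hmert (Suc N) \<le> Smert (Suc N) / L' + ln L' - ln (ln 2) + 4 * ln 2 * (1 / ln 2 - 1 / L')"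
    using IH H' e2 e3 e4 step by linarith
  then show ?case unfolding L'_def .
qed

lemma Hmert_bound:
  assumes "N \<ge> 2" shows "Hmert N \<le> ln (ln (real N)) + (9 - ln (ln 2))"
proof -
  have L2: "ln (real N) \<ge> ln 2" using assms by simp
  have l2: "ln (2::real) > 0" by simp
  have LN0: "ln (real N) > 0" using L2 l2 by linarith
  have "Smert N / ln (real N) \<le> (ln (real N) + 4 * ln 2) / ln (real N)"
    using Smert_bound[of N] assms L2 l2 by (intro divide_right_mono) auto
  also have "\<dots> = 1 + 4 * ln 2 / ln (real N)"
  proof -
    have "ln (real N) \<noteq> 0" using L2 l2 by linarith
    then show ?thesis by (simp add: field_simps)
  qed
  also have "\<dots> \<le> 1 + 4 * ln 2 / ln 2"
    using L2 l2 LN0 by (intro add_left_mono divide_left_mono) (auto intro!: mult_pos_pos)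
  also have "\<dots> = 5" by simp
  finally have a: "Smert N / ln (real N) \<le> 5" .
  have b: "4 * ln 2 * (1 / ln 2 - 1 / ln (real N)) \<le> 4"
  proof -
    have LN: "ln (real N) > 0" using L2 l2 by linarith
    have "4 * ln 2 * (1 / ln 2 - 1 / ln (real N)) = 4 - 4 * ln 2 / ln (real N)"
      using l2 by (simp add: right_diff_distrib)
    moreover have "4 * ln 2 / ln (real N) \<ge> 0" using LN l2 by simp
    ultimately show ?thesis by linarith
  qed
  show ?thesis using Hmert_aux[OF assms] a b by linarith
qed


abbreviation MM :: "nat \<Rightarrow> nat measure" where "MM p \<equiv> measure_pmf (np_pmf p)"

lemma pps: "product_prob_space MM"
  by (simp add: product_prob_space_def product_sigma_finite_def product_prob_space_axioms_def
      prob_space_measure_pmf prob_space_imp_sigma_finite)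

lemma rand_model_prob: "prob_space rand_model"
  unfolding rand_model_def by (rule prob_space_PiM) (simp add: prob_space_measure_pmf)

lemma meas_prod:
  assumes "finite J" "J \<subseteq> I" "\<And>p v. f p v \<ge> 0" "c \<ge> 0"
  shows "(\<lambda>w. ennreal (c * (\<Prod>p\<in>J. f p (w p)))) \<in> borel_measurable (PiM I MM)"
proof -
  have m1: "(\<lambda>w. ennreal (f p (w p))) \<in> borel_measurable (PiM I MM)" if "p \<in> J" for p
    by (rule measurable_compose[OF measurable_component_singleton]) (use that assms(2) in auto)
  have eq: "(\<lambda>w. ennreal (c * (\<Prod>p\<in>J. f p (w p)))) = (\<lambda>w. ennreal c * (\<Prod>p\<in>J. ennreal (f p (w p))))"
    using assms by (auto simp: ennreal_mult prod_ennreal prod_nonneg)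
  show ?thesis unfolding eq using m1 by measurable
qed

lemma prod_integral:
  assumes "finite J" "J \<subseteq> I" "\<And>p v. f p v \<ge> 0" "c \<ge> 0"
  shows "(\<integral>\<^sup>+w. ennreal (c * (\<Prod>p\<in>J. f p (w p))) \<partial>PiM I MM)
           = ennreal c * (\<Prod>p\<in>J. \<integral>\<^sup>+v. ennreal (f p v) \<partial>MM p)"
proof -
  interpret product_prob_space MM I by (rule pps)
  let ?F = "\<lambda>z. ennreal (c * (\<Prod>p\<in>J. f p (z p)))"
  have "(\<integral>\<^sup>+w. ennreal (c * (\<Prod>p\<in>J. f p (w p))) \<partial>PiM I MM) = (\<integral>\<^sup>+w. ?F (restrict w J) \<partial>PiM I MM)"
    by (intro nn_integral_cong) (auto intro!: prod.cong)
  also have "\<dots> = (\<integral>\<^sup>+z. ?F z \<partial>distr (PiM I MM) (PiM J MM) (\<lambda>w. restrict w J))"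
  proof -
    have mr: "(\<lambda>w. restrict w J) \<in> measurable (PiM I MM) (PiM J MM)"
      by (rule measurable_restrict_subset[OF assms(2)])
    have mF: "?F \<in> borel_measurable (PiM J MM)" by (rule meas_prod[OF assms(1) subset_refl assms(3,4)])
    show ?thesis by (rule nn_integral_distr[symmetric, OF mr]) (simp add: mF)
  qed
  also have "\<dots> = (\<integral>\<^sup>+z. ?F z \<partial>PiM J MM)"
    by (simp add: distr_PiM_restrict_finite assms(1,2))
  also have "\<dots> = (\<integral>\<^sup>+z. ennreal c * (\<Prod>p\<in>J. ennreal (f p (z p))) \<partial>PiM J MM)"
    using assms by (intro nn_integral_cong) (auto simp: ennreal_mult prod_ennreal prod_nonneg)
  also have "\<dots> = ennreal c * (\<integral>\<^sup>+z. (\<Prod>p\<in>J. ennreal (f p (z p))) \<partial>PiM J MM)"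
    by (rule nn_integral_cmult) (measurable)
  also have "(\<integral>\<^sup>+z. (\<Prod>p\<in>J. ennreal (f p (z p))) \<partial>PiM J MM) = (\<Prod>p\<in>J. \<integral>\<^sup>+v. ennreal (f p v) \<partial>MM p)"
    by (rule product_nn_integral_prod) (auto simp: assms(1))
  finally show ?thesis .
qed

lemma np_integral:
  assumes "prime p" "\<And>v. g v \<ge> 0"
  shows "(\<integral>\<^sup>+v. ennreal (g v) \<partial>MM p) = ennreal (g p / (real p + 1) + g 1 * real p / (real p + 1))"
proof -
  have q: "0 \<le> 1 / (real p + 1)" "1 / (real p + 1) \<le> (1::real)" by auto
  have "(\<integral>\<^sup>+v. ennreal (g v) \<partial>MM p) = (\<integral>\<^sup>+b. ennreal (g (if b then p else 1)) \<partial>bernoulli_pmf (1 / (real p + 1)))"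
    by (simp add: np_pmf_def)
  also have "\<dots> = ennreal (g p) * ennreal (1 / (real p + 1)) + ennreal (g 1) * ennreal (1 - 1 / (real p + 1))"
    using q by (subst nn_integral_bernoulli_pmf) auto
  also have "\<dots> = ennreal (g p / (real p + 1) + g 1 * real p / (real p + 1))"
  proof -
    have "1 - 1 / (real p + 1) = real p / (real p + 1)" by (simp add: field_simps)
    then show ?thesis using assms(2)[of p] assms(2)[of 1]
      by (simp add: ennreal_mult[symmetric] ennreal_plus[symmetric] del: ennreal_plus)
  qed
  finally show ?thesis .
qed

lemma AE_good: "AE w in rand_model. \<forall>p\<in>{p. prime p}. w p = 1 \<or> w p = p"
proof -
  interpret product_prob_space MM "{p. prime p}" by (rule pps)
  show ?thesis unfolding rand_model_def
  proof (subst AE_ball_countable)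
    show "countable {p::nat. prime p}" by simp
    show "\<forall>p\<in>{p. prime p}. AE w in PiM {p. prime p} MM. w p = 1 \<or> w p = p"
    proof
      fix p :: nat assume p: "p \<in> {p. prime p}"
      have "AE v in MM p. v = 1 \<or> v = p"
        by (auto simp: AE_measure_pmf_iff np_pmf_def)
      then show "AE w in PiM {p. prime p} MM. w p = 1 \<or> w p = p"
        using p by (rule AE_component[rotated])
    qed
  qed
qed


definition PP :: "real \<Rightarrow> nat set" where "PP y = {p. prime p \<and> real p < y}"

lemma PP_sub: "PP y \<subseteq> {p. prime p}" by (auto simp: PP_def)

lemma finite_PP: "finite (PP y)"
proof (rule finite_subset[of _ "{..nat \<lceil>y\<rceil>}"])
  show "PP y \<subseteq> {..nat \<lceil>y\<rceil>}"
  proof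
    fix p assume "p \<in> PP y"
    then have "real p < y" by (simp add: PP_def)
    then have "real p \<le> real (nat \<lceil>y\<rceil>)" by linarith
    then show "p \<in> {..nat \<lceil>y\<rceil>}" by simp
  qed
qed simp

definition phi :: "real \<Rightarrow> nat \<Rightarrow> nat \<Rightarrow> real" where
  "phi s p v = (if v = p then 2 * real p powr s else 1)"

lemma phi_nonneg: "phi s p v \<ge> 0" by (simp add: phi_def)

lemma sums_PP:
  fixes f :: "nat \<Rightarrow> real"
  assumes "y \<ge> 0" "\<And>p. f p \<ge> 0"
  shows "(\<Sum>p\<in>PP y. f p) \<le> (\<Sum>k\<le>nat \<lfloor>y\<rfloor>. if prime k then f k else 0)"
proof -
  have sub: "PP y \<subseteq> {p. prime p \<and> p \<le> nat \<lfloor>y\<rfloor>}"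
  proof
    fix p assume "p \<in> PP y"
    then have "prime p" "real p < y" by (auto simp: PP_def)
    have "of_int (int p) \<le> y" using \<open>real p < y\<close> by simp
    then have "int p \<le> \<lfloor>y\<rfloor>" by (simp only: le_floor_iff)
    then have "p \<le> nat \<lfloor>y\<rfloor>" by simp
    with \<open>prime p\<close> show "p \<in> {p. prime p \<and> p \<le> nat \<lfloor>y\<rfloor>}" by simp
  qed
  have fin: "finite {p. prime p \<and> p \<le> nat \<lfloor>y\<rfloor>}" by (rule finite_subset[of _ "{..nat \<lfloor>y\<rfloor>}"]) auto
  have "(\<Sum>p\<in>PP y. f p) \<le> (\<Sum>p\<in>{p. prime p \<and> p \<le> nat \<lfloor>y\<rfloor>}. f p)"
    by (rule sum_mono2[OF fin sub]) (simp add: assms(2))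
  then show ?thesis by (simp add: sum_primes_eq)
qed

lemma lnp_nonneg: "0 \<le> ln (real p) / real p"
proof (cases "p = 0")
  case False
  then have "real p \<ge> 1" by simp
  then show ?thesis by simp
qed simp

lemma exp_le_lin: fixes t :: real assumes "0 \<le> t" "t \<le> 1" shows "exp t \<le> 1 + exp 1 * t"
proof -
  have "1 - t \<le> exp (-t)" using exp_ge_add_one_self[of "-t"] by simp
  then have "(1 - t) * exp t \<le> exp (-t) * exp t" by (rule mult_right_mono) simp
  also have "exp (-t) * exp t = 1" by (simp add: exp_minus field_simps)
  finally have "exp t \<le> 1 + t * exp t" by (simp add: algebra_simps)
  also have "t * exp t \<le> t * exp 1" using assms by (intro mult_left_mono) auto
  finally show ?thesis by (simp add: mult.commute)
qed

lemma factor_bound: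
  assumes p: "prime p" and py: "real p < y" and ly: "ln y > 0"
  shows "phi (1/ln y) p p / (real p + 1) + phi (1/ln y) p 1 * real p / (real p + 1)
           \<le> exp (1 / real p + 2 * exp 1 * (ln (real p) / real p) / ln y)"
proof -
  have p1: "real p \<ge> 2" using prime_ge_2_nat[OF p] by simp
  have pn1: "p \<noteq> 1" using p by auto
  define t where "t = ln (real p) / ln y"
  have t0: "t \<ge> 0" using p1 ly by (simp add: t_def)
  have "ln (real p) < ln y" using py p1 by simp
  then have t1: "t \<le> 1" using ly by (simp add: t_def)
  define u where "u = real p powr (1 / ln y)"
  have u_eq: "u = exp t" using p1 by (simp add: u_def t_def powr_def)
  have u1: "u \<ge> 1" using u_eq t0 by simp
  have u2: "u \<le> 1 + exp 1 * t" using u_eq exp_le_lin[OF t0 t1] by simp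
  have "phi (1/ln y) p p / (real p + 1) + phi (1/ln y) p 1 * real p / (real p + 1)
        = (2 * u + real p) / (real p + 1)" using pn1 by (simp add: phi_def u_def add_divide_distrib)
  also have "\<dots> = 1 + (2 * u - 1) / (real p + 1)" using p1 by (simp add: field_simps)
  also have "\<dots> \<le> 1 + (2 * u - 1) / real p"
    using u1 p1 by (intro add_left_mono divide_left_mono) auto
  also have "\<dots> \<le> 1 + (1 + 2 * exp 1 * t) / real p"
    using u2 p1 by (intro add_left_mono divide_right_mono) auto
  also have "\<dots> \<le> exp ((1 + 2 * exp 1 * t) / real p)" by (rule exp_ge_add_one_self)
  also have "(1 + 2 * exp 1 * t) / real p = 1 / real p + 2 * exp 1 * (ln (real p) / real p) / ln y"
    by (simp add: t_def field_simps add_divide_distrib)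
  finally show ?thesis .
qed

definition K1 :: real where "K1 = exp (9 - ln (ln 2) + 2 * exp 1 * (1 + 4 * ln 2))"

lemma per_y_real:
  assumes y0: "y > 0" and ly: "ln y \<ge> exp 1"
  shows "(\<Prod>p\<in>PP y. phi (1/ln y) p p / (real p + 1) + phi (1/ln y) p 1 * real p / (real p + 1))
          \<le> ln y * K1"
proof -
  have ly1: "ln y > 1" using ly exp_gt_one[of 1] by linarith
  have ye: "y \<ge> exp (exp 1)" using ly y0 by (subst (asm) ln_ge_iff) auto
  have y2: "y \<ge> 2"
  proof -
    have "exp (exp 1) \<ge> exp (1::real)" using exp_gt_one[of 1] by simp
    moreover have "exp (1::real) \<ge> 2" using exp_ge_add_one_self[of 1] by simp
    ultimately show ?thesis using ye by linarith
  qed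
  define N where "N = nat \<lfloor>y\<rfloor>"
  have N2: "N \<ge> 2" using y2 by (simp add: N_def le_nat_iff le_floor_iff)
  have Ny: "real N \<le> y" using y0 by (simp add: N_def)
  have lN: "ln (real N) \<le> ln y" using N2 Ny by simp
  have lN0: "ln (real N) > 0" using N2 by simp
  have llN: "ln (ln (real N)) \<le> ln (ln y)" using lN lN0 by (subst ln_le_cancel_iff) auto
  define b where "b = (\<lambda>p. 1 / real p + 2 * exp 1 * (ln (real p) / real p) / ln y)"
  have "(\<Prod>p\<in>PP y. phi (1/ln y) p p / (real p + 1) + phi (1/ln y) p 1 * real p / (real p + 1))
         \<le> (\<Prod>p\<in>PP y. exp (b p))"
  proof (rule prod_mono)
    fix p assume "p \<in> PP y"
    then have "prime p" "real p < y" by (auto simp: PP_def)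
    then show "0 \<le> phi (1/ln y) p p / (real p + 1) + phi (1/ln y) p 1 * real p / (real p + 1) \<and>
      phi (1/ln y) p p / (real p + 1) + phi (1/ln y) p 1 * real p / (real p + 1) \<le> exp (b p)"
      using factor_bound[of p y] ly1 y2 by (auto simp: b_def phi_nonneg)
  qed
  also have "\<dots> = exp (\<Sum>p\<in>PP y. b p)" by (simp add: exp_sum finite_PP)
  also have "(\<Sum>p\<in>PP y. b p) = (\<Sum>p\<in>PP y. 1 / real p) + 2 * exp 1 / ln y * (\<Sum>p\<in>PP y. ln (real p) / real p)"
    by (simp add: b_def sum.distrib sum_distrib_left sum_divide_distrib mult_ac)
  also have "\<dots> \<le> (ln (ln y) + (9 - ln (ln 2))) + 2 * exp 1 / ln y * (ln y + 4 * ln 2)"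
  proof (rule add_mono)
    have "(\<Sum>p\<in>PP y. 1 / real p) \<le> Hmert N"
      unfolding Hmert_def N_def by (rule sums_PP) (use y0 in auto)
    also have "\<dots> \<le> ln (ln (real N)) + (9 - ln (ln 2))" by (rule Hmert_bound[OF N2])
    finally show "(\<Sum>p\<in>PP y. 1 / real p) \<le> ln (ln y) + (9 - ln (ln 2))" using llN by linarith
  next
    have "(\<Sum>p\<in>PP y. ln (real p) / real p) \<le> Smert N"
      unfolding Smert_def N_def by (rule sums_PP) (use y0 lnp_nonneg in auto)
    also have "\<dots> \<le> ln (real N) + 4 * ln 2" using Smert_bound[of N] N2 by simp
    finally have "(\<Sum>p\<in>PP y. ln (real p) / real p) \<le> ln y + 4 * ln 2" using lN by linarith
    then show "2 * exp 1 / ln y * (\<Sum>p\<in>PP y. ln (real p) / real p) \<le> 2 * exp 1 / ln y * (ln y + 4 * ln 2)"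
      using ly1 by (intro mult_left_mono) auto
  qed
  also have "2 * exp 1 / ln y * (ln y + 4 * ln 2) \<le> 2 * exp 1 * (1 + 4 * ln 2)"
  proof -
    have "2 * exp 1 / ln y * (ln y + 4 * ln 2) = 2 * exp 1 * (1 + 4 * ln 2 / ln y)"
      using ly1 by (simp add: field_simps)
    also have "4 * ln 2 / ln y \<le> 4 * ln 2" using ly1 by (simp add: divide_le_eq)
    then have "2 * exp 1 * (1 + 4 * ln 2 / ln y) \<le> 2 * exp 1 * (1 + 4 * ln 2)" by simp
    finally show ?thesis .
  qed
  finally have "(\<Prod>p\<in>PP y. phi (1/ln y) p p / (real p + 1) + phi (1/ln y) p 1 * real p / (real p + 1))
       \<le> exp (ln (ln y) + (9 - ln (ln 2)) + 2 * exp 1 * (1 + 4 * ln 2))" by simp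
  also have "\<dots> = ln y * K1" using ly1 by (simp add: K1_def exp_add)
  finally show ?thesis .
qed

lemma per_y:
  assumes y0: "y > 0" and ly: "ln y \<ge> exp 1" and L: "L \<ge> 1"
  shows "(\<integral>\<^sup>+w. ennreal (1 / (ln y * L^10) * (\<Prod>p\<in>PP y. phi (1/ln y) p (w p))) \<partial>rand_model)
           \<le> ennreal (K1 / L^10)"
proof -
  have ly1: "ln y > 0" using ly exp_gt_zero[of 1] by linarith
  have c0: "1 / (ln y * L^10) \<ge> 0" using ly1 L by simp
  have "(\<integral>\<^sup>+w. ennreal (1 / (ln y * L^10) * (\<Prod>p\<in>PP y. phi (1/ln y) p (w p))) \<partial>rand_model)
    = ennreal (1 / (ln y * L^10)) * (\<Prod>p\<in>PP y. \<integral>\<^sup>+v. ennreal (phi (1/ln y) p v) \<partial>MM p)"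
    unfolding rand_model_def by (rule prod_integral[OF finite_PP PP_sub phi_nonneg c0])
  also have "(\<Prod>p\<in>PP y. \<integral>\<^sup>+v. ennreal (phi (1/ln y) p v) \<partial>MM p)
     = (\<Prod>p\<in>PP y. ennreal (phi (1/ln y) p p / (real p + 1) + phi (1/ln y) p 1 * real p / (real p + 1)))"
    by (intro prod.cong refl np_integral phi_nonneg) (auto simp: PP_def)
  also have "\<dots> = ennreal (\<Prod>p\<in>PP y. phi (1/ln y) p p / (real p + 1) + phi (1/ln y) p 1 * real p / (real p + 1))"
    by (rule prod_ennreal) (simp add: phi_nonneg)
  also have "ennreal (1 / (ln y * L^10)) * \<dots> = ennreal (1 / (ln y * L^10) *
      (\<Prod>p\<in>PP y. phi (1/ln y) p p / (real p + 1) + phi (1/ln y) p 1 * real p / (real p + 1)))"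
    by (rule ennreal_mult[symmetric, OF c0]) (simp add: prod_nonneg phi_nonneg)
  also have "\<dots> \<le> ennreal (K1 / L^10)"
  proof (rule ennreal_leI)
    have "1 / (ln y * L^10) * (\<Prod>p\<in>PP y. phi (1/ln y) p p / (real p + 1) + phi (1/ln y) p 1 * real p / (real p + 1))
          \<le> 1 / (ln y * L^10) * (ln y * K1)"
      by (rule mult_left_mono[OF per_y_real[OF y0 ly] c0])
    also have "\<dots> = K1 / L^10" using ly1 by simp
    finally show "1 / (ln y * L^10) * (\<Prod>p\<in>PP y. phi (1/ln y) p p / (real p + 1) + phi (1/ln y) p 1 * real p / (real p + 1))
          \<le> K1 / L^10" .
  qed
  finally show ?thesis .
qed


lemma tau_mult_prime:
  assumes "prime p" "m > 0" shows "tau (p * m) \<le> 2 * tau m"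
proof -
  have sub: "{d. d dvd p * m} \<subseteq> {d. d dvd m} \<union> (\<lambda>d. p * d) ` {d. d dvd m}"
  proof
    fix d assume "d \<in> {d. d dvd p * m}"
    then have d: "d dvd p * m" by simp
    show "d \<in> {d. d dvd m} \<union> (\<lambda>d. p * d) ` {d. d dvd m}"
    proof (cases "p dvd d")
      case True
      then obtain e where e: "d = p * e" by (auto elim: dvdE)
      then have "e dvd m" using d assms(1) by (simp add: prime_gt_0_nat)
      then show ?thesis using e by auto
    next
      case False
      then have "coprime p d" using assms(1) by (simp add: prime_imp_coprime)
      then have "coprime d p" by (simp add: coprime_commute)
      then have "d dvd m" using d coprime_dvd_mult_right_iff[of d p m] by simp
      then show ?thesis by simp
    qed
  qed
  have fin: "finite {d. d dvd m}" using assms(2) by simp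
  have c1: "tau (p*m) \<le> card ({d. d dvd m} \<union> (\<lambda>d. p * d) ` {d. d dvd m})"
    unfolding tau_def by (rule card_mono) (use fin sub in auto)
  have c2: "card ({d. d dvd m} \<union> (\<lambda>d. p * d) ` {d. d dvd m}) \<le> card {d. d dvd m} + card ((\<lambda>d. p * d) ` {d. d dvd m})"
    by (rule card_Un_le)
  have c3: "card ((\<lambda>d. p * d) ` {d. d dvd m}) \<le> card {d. d dvd m}" by (rule card_image_le[OF fin])
  show ?thesis using c1 c2 c3 by (simp add: tau_def)
qed

lemma tau_prod:
  assumes "finite J" "J \<subseteq> {p. prime p}" "\<forall>p\<in>J. w p = 1 \<or> w p = p"
  shows "real (tau (\<Prod>p\<in>J. w p)) \<le> (\<Prod>p\<in>J. if w p = p then 2 else 1)"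
  using assms
proof (induction J rule: finite_induct)
  case empty then show ?case by (simp add: tau_def)
next
  case (insert q J)
  have IH: "real (tau (\<Prod>p\<in>J. w p)) \<le> (\<Prod>p\<in>J. if w p = p then 2 else 1)" using insert by auto
  have pos: "(\<Prod>p\<in>J. w p) > 0"
  proof (rule prod_pos)
    fix p assume "p \<in> J"
    then have "prime p" "w p = 1 \<or> w p = p" using insert.prems by auto
    then show "0 < w p" using prime_gt_0_nat by auto
  qed
  have q: "prime q" "w q = 1 \<or> w q = q" using insert.prems by auto
  show ?case
  proof (cases "w q = q")
    case True
    have "tau (\<Prod>p\<in>insert q J. w p) = tau (q * (\<Prod>p\<in>J. w p))" using insert.hyps True by simp
    also have "\<dots> \<le> 2 * tau (\<Prod>p\<in>J. w p)" by (rule tau_mult_prime[OF q(1) pos])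
    finally have "real (tau (\<Prod>p\<in>insert q J. w p)) \<le> 2 * real (tau (\<Prod>p\<in>J. w p))" by linarith
    also have "\<dots> \<le> 2 * (\<Prod>p\<in>J. if w p = p then 2 else 1)" using IH by simp
    also have "\<dots> = (\<Prod>p\<in>insert q J. if w p = p then 2 else 1)" using insert.hyps True by simp
    finally show ?thesis .
  next
    case False
    then have "w q = 1" using q by auto
    then show ?thesis using insert.hyps IH False by simp
  qed
qed

lemma powr_prod_nat: "finite J \<Longrightarrow> real (\<Prod>p\<in>J. w p) powr s = (\<Prod>p\<in>J. real (w p) powr s)"
  by (induction J rule: finite_induct) (auto simp: powr_mult)

lemma pointwise:
  assumes good: "\<forall>p\<in>{p. prime p}. w p = 1 \<or> w p = p"
    and y0: "y > 0" and ly: "ln y \<ge> exp 1" and L: "L \<ge> 1" and L3: "Log3 x \<ge> ln L"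
  shows "real (tau (n_below w y)) / Log y * (if \<not> E_event x y w then 1 else 0)
          \<le> 1 / (ln y * L^10) * (\<Prod>p\<in>PP y. phi (1/ln y) p (w p))"
proof -
  have ly1: "ln y > 1" using ly exp_gt_one[of 1] by linarith
  have Logy: "Log y = ln y" using ly1 by (simp add: Log_def)
  define n where "n = (\<Prod>p\<in>PP y. w p)"
  have nb: "n_below w y = n" by (simp add: n_below_def PP_def n_def)
  have goodJ: "\<forall>p\<in>PP y. w p = 1 \<or> w p = p" using good PP_sub by auto
  have n0: "n > 0" unfolding n_def
  proof (rule prod_pos)
    fix p assume "p \<in> PP y"
    then have "prime p" "w p = 1 \<or> w p = p" using goodJ by (auto simp: PP_def)
    then show "0 < w p" using prime_gt_0_nat by auto
  qed
  have tb: "real (tau n) \<le> (\<Prod>p\<in>PP y. if w p = p then 2 else 1)"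
    unfolding n_def by (rule tau_prod[OF finite_PP PP_sub goodJ])
  have pw: "real n powr (1/ln y) = (\<Prod>p\<in>PP y. real (w p) powr (1/ln y))"
    unfolding n_def by (rule powr_prod_nat[OF finite_PP])
  have comb: "(\<Prod>p\<in>PP y. (if w p = p then 2 else 1) * real (w p) powr (1/ln y)) = (\<Prod>p\<in>PP y. phi (1/ln y) p (w p))"
  proof (rule prod.cong[OF refl])
    fix p assume p: "p \<in> PP y"
    then have "prime p" by (simp add: PP_def)
    then have "p \<noteq> 1" by auto
    then show "(if w p = p then 2 else 1) * real (w p) powr (1/ln y) = phi (1/ln y) p (w p)"
      using goodJ p by (auto simp: phi_def)
  qed
  have Pnn: "0 \<le> (\<Prod>p\<in>PP y. phi (1/ln y) p (w p))" by (simp add: prod_nonneg phi_nonneg)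
  have c0: "0 \<le> 1 / (ln y * L^10)" using ly1 L by simp
  show ?thesis
  proof (cases "E_event x y w")
    case True
    then show ?thesis using Pnn c0 by simp
  next
    case False
    then have big: "ln (real n) > 10 * Log3 x * ln y" by (simp add: E_event_def nb Logy)
    have "ln (real n) / ln y > 10 * Log3 x" using big ly1 by (simp add: pos_less_divide_eq)
    moreover have "10 * Log3 x \<ge> 10 * ln L" using L3 by simp
    ultimately have "exp (ln (real n) / ln y) \<ge> exp (10 * ln L)" by simp
    moreover have "exp (10 * ln L) = L^10"
    proof -
      have "exp (real 10 * ln L) = exp (ln L) ^ 10" by (rule exp_of_nat_mult)
      then show ?thesis using L by simp
    qed
    moreover have "real n powr (1/ln y) = exp (ln (real n) / ln y)" using n0 by (simp add: powr_def)
    ultimately have npow: "real n powr (1/ln y) \<ge> L^10" by simp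
    have L10: "L^10 > 0" using L by simp
    have t0: "real (tau n) / ln y \<ge> 0" using ly1 by simp
    have "real (tau (n_below w y)) / Log y * (if \<not> E_event x y w then 1 else 0) = real (tau n) / ln y"
      using False by (simp add: nb Logy)
    also have "\<dots> \<le> real (tau n) / ln y * (real n powr (1/ln y) / L^10)"
    proof -
      have "1 \<le> real n powr (1/ln y) / L^10" using npow L10 by simp
      then show ?thesis using t0 by (metis mult.right_neutral mult_left_mono)
    qed
    also have "\<dots> = 1 / (ln y * L^10) * (real (tau n) * real n powr (1/ln y))" by simp
    also have "\<dots> \<le> 1 / (ln y * L^10) * ((\<Prod>p\<in>PP y. if w p = p then 2 else 1) * real n powr (1/ln y))"
      by (intro mult_left_mono mult_right_mono tb c0) simp
    also have "(\<Prod>p\<in>PP y. if w p = p then 2 else 1) * real n powr (1/ln y) = (\<Prod>p\<in>PP y. phi (1/ln y) p (w p))"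
      unfolding pw comb[symmetric] by (simp add: prod.distrib)
    finally show ?thesis .
  qed
qed


lemma Log_ge1: "Log z \<ge> 1" by (simp add: Log_def)

lemma Yset_elem:
  assumes "y \<in> Yset x \<alpha>" "\<alpha> * Log2 x - sqrt (Log2 x) \<ge> 2"
  shows "y > 0" "ln y \<ge> exp 1" "Log2 y = ln (ln y)"
proof -
  from assms(1) have y0: "y > 0" and ab: "\<bar>Log2 y - \<alpha> * Log2 x\<bar> \<le> sqrt (Log2 x)"
    by (auto simp: Yset_def)
  show "y > 0" by (rule y0)
  have "Log2 y \<ge> 2" using ab assms(2) by linarith
  then have l2: "ln (Log y) \<ge> 2" by (simp add: Log2_def Log_def)
  have "Log y > 0" using Log_ge1[of y] by linarith
  then have "Log y \<ge> exp 2" using l2 by (simp add: ln_ge_iff)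
  moreover have "exp (2::real) \<ge> exp 1" by simp
  moreover have "exp (1::real) > 1" by simp
  ultimately have Ly: "Log y = ln y" "ln y \<ge> exp 2" by (auto simp: Log_def max_def split: if_splits)
  then show "ln y \<ge> exp 1" using \<open>exp (2::real) \<ge> exp 1\<close> by linarith
  show "Log2 y = ln (ln y)" using l2 Ly by (simp add: Log2_def Log_def max_def)
qed

lemma main_bound:
  assumes L4: "Log2 x \<ge> 4" and aL: "\<alpha> * Log2 x - sqrt (Log2 x) \<ge> 2"
  shows "(\<integral>w. (if omega (n_below w x) = r then 1 else 0) *
                   Max ((\<lambda>y. real (tau (n_below w y)) / Log y *
                              (if \<not> E_event x y w then 1 else 0)) ` Yset x \<alpha>)
             \<partial>rand_model) \<le> (2 / ln 2 + 1) * K1 / (Log2 x) ^ 9"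
proof -
  define L where "L = Log2 x"
  define Y where "Y = Yset x \<alpha>"
  have L1: "L \<ge> 1" and L0: "L > 0" using L4 by (auto simp: L_def)
  have sqL: "sqrt L \<le> L"
  proof -
    have e: "sqrt L * sqrt L = L" using L0 by simp
    have "sqrt L \<ge> 1" using L1 by simp
    then have "sqrt L * 1 \<le> sqrt L * sqrt L" by (intro mult_left_mono) auto
    then show ?thesis using e by simp
  qed
  have l2: "ln (2::real) > 0" "ln (2::real) < 1" using ln_2_less_1 by auto
  have Yel: "y > 0" "ln y \<ge> exp 1" "Log2 y = ln (ln y)" if "y \<in> Y" for y
    using Yset_elem[of y x \<alpha>] that aL by (auto simp: Y_def)
  define g where "g y = \<lfloor>Log2 y / ln 2\<rfloor>" for y
  define a where "a = (\<alpha> * L - sqrt L) / ln 2"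
  define b where "b = (\<alpha> * L + sqrt L) / ln 2"
  have gint: "real_of_int (g y) = Log2 y / ln 2" if "y \<in> Y" for y
  proof -
    have "Log2 y / ln 2 \<in> \<int>" using that by (simp add: Y_def Yset_def)
    then show ?thesis by (auto simp: g_def elim!: Ints_cases)
  qed
  have inj: "inj_on g Y"
  proof (rule inj_onI)
    fix y1 y2 assume y: "y1 \<in> Y" "y2 \<in> Y" "g y1 = g y2"
    then have "Log2 y1 / ln 2 = Log2 y2 / ln 2" using gint by metis
    then have "ln (ln y1) = ln (ln y2)" using l2 Yel y by simp
    moreover have "ln y1 > 0" "ln y2 > 0" using Yel[OF y(1)] Yel[OF y(2)] exp_gt_zero[of 1] by linarith+
    ultimately have "ln y1 = ln y2" by simp
    then show "y1 = y2" using Yel[OF y(1)] Yel[OF y(2)] by simp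
  qed
  have gsub: "g ` Y \<subseteq> {\<lceil>a\<rceil>..\<lfloor>b\<rfloor>}"
  proof
    fix k assume "k \<in> g ` Y"
    then obtain y where y: "y \<in> Y" "k = g y" by auto
    have ab: "\<bar>Log2 y - \<alpha> * L\<bar> \<le> sqrt L" using y(1) by (simp add: Y_def Yset_def L_def)
    then have "a \<le> Log2 y / ln 2" "Log2 y / ln 2 \<le> b" using l2
      by (auto simp: a_def b_def divide_right_mono)
    then have "a \<le> real_of_int k" "real_of_int k \<le> b" using gint[OF y(1)] y(2) by auto
    then show "k \<in> {\<lceil>a\<rceil>..\<lfloor>b\<rfloor>}" by (simp add: ceiling_le_iff le_floor_iff)
  qed
  have finY: "finite Y"
    using finite_subset[OF gsub] inj by (simp add: finite_image_iff[symmetric])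
  have cardY: "real (card Y) \<le> 2 * sqrt L / ln 2 + 1"
  proof -
    have "card Y = card (g ` Y)" using inj by (simp add: card_image)
    also have "\<dots> \<le> card {\<lceil>a\<rceil>..\<lfloor>b\<rfloor>}" by (rule card_mono) (use gsub in auto)
    also have "\<dots> = nat (\<lfloor>b\<rfloor> - \<lceil>a\<rceil> + 1)" by simp
    finally have "real (card Y) \<le> real (nat (\<lfloor>b\<rfloor> - \<lceil>a\<rceil> + 1))" by linarith
    also have "\<dots> \<le> b - a + 1"
    proof -
      have "b - a = 2 * sqrt L / ln 2" by (simp add: a_def b_def field_simps)
      then have "b - a \<ge> 0" using l2 L0 by (simp add: divide_nonneg_pos)
      moreover have "real_of_int (\<lfloor>b\<rfloor> - \<lceil>a\<rceil> + 1) \<le> b - a + 1"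
        using of_int_floor_le[of b] le_of_int_ceiling[of a] by linarith
      ultimately show ?thesis by (cases "\<lfloor>b\<rfloor> - \<lceil>a\<rceil> + 1 \<ge> 0") auto
    qed
    also have "b - a = 2 * sqrt L / ln 2" by (simp add: a_def b_def field_simps)
    finally show ?thesis by simp
  qed
  have Yne: "Y \<noteq> {}"
  proof -
    define k where "k = \<lfloor>\<alpha> * L / ln 2\<rfloor>"
    define t where "t = real_of_int k * ln 2"
    have t1: "t \<le> \<alpha> * L"
    proof -
      have "real_of_int k \<le> \<alpha> * L / ln 2" unfolding k_def by (rule of_int_floor_le)
      then have "real_of_int k * ln 2 \<le> \<alpha> * L" using l2 by (simp add: le_divide_eq)
      then show ?thesis by (simp add: t_def)
    qed
    have t2: "t > \<alpha> * L - ln 2"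
    proof -
      have "\<alpha> * L / ln 2 < real_of_int k + 1" by (simp add: k_def)
      then have "\<alpha> * L < (real_of_int k + 1) * ln 2" using l2 by (simp add: divide_less_eq)
      then show ?thesis by (simp add: t_def algebra_simps)
    qed
    have sq2: "sqrt L \<ge> 1" using L1 by simp
    have tge: "t \<ge> 1" using t2 aL l2 sq2 unfolding L_def by linarith
    define y where "y = exp (exp t)"
    have Ly: "Log y = exp t" using tge by (simp add: y_def Log_def max_def)
    have L2y: "Log2 y = t" unfolding Log2_def Ly using tge by (simp add: Log_def max_def)
    have "y \<in> Y"
    proof -
      have "\<bar>Log2 y - \<alpha> * Log2 x\<bar> \<le> sqrt (Log2 x)" using L2y t1 t2 l2 sq2 unfolding L_def by linarith
      moreover have "Log2 y / ln 2 \<in> \<int>" using L2y l2 by (simp add: t_def)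
      ultimately show ?thesis by (simp add: Y_def Yset_def y_def)
    qed
    then show ?thesis by auto
  qed
  define G where "G y w = 1 / (ln y * L^10) * (\<Prod>p\<in>PP y. phi (1/ln y) p (w p))" for y w
  have Gnn: "G y w \<ge> 0" if "y \<in> Y" for y w
  proof -
    have "ln y > 0" using Yel[OF that] exp_gt_zero[of 1] by linarith
    then show ?thesis using L0 by (simp add: G_def prod_nonneg phi_nonneg)
  qed
  define F where "F w = (if omega (n_below w x) = r then 1 else 0) *
                   Max ((\<lambda>y. real (tau (n_below w y)) / Log y *
                              (if \<not> E_event x y w then 1 else 0)) ` Y)" for w
  have L3: "Log3 x \<ge> ln L" by (simp add: Log3_def Log_def L_def)
  have dom: "F w \<le> (\<Sum>y\<in>Y. G y w)" if good: "\<forall>p\<in>{p. prime p}. w p = 1 \<or> w p = p" for w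
  proof -
    define h where "h y = real (tau (n_below w y)) / Log y * (if \<not> E_event x y w then 1 else 0)" for y
    have h0: "h y \<ge> 0" for y using Log_ge1[of y] by (simp add: h_def)
    have hG: "h y \<le> G y w" if "y \<in> Y" for y
      unfolding h_def G_def by (rule pointwise[OF good Yel(1,2)[OF that] L1 L3])
    have hS: "h y \<le> (\<Sum>y\<in>Y. G y w)" if "y \<in> Y" for y
    proof -
      have "G y w \<le> (\<Sum>y\<in>Y. G y w)" by (rule member_le_sum[OF that]) (use Gnn finY in auto)
      then show ?thesis using hG[OF that] by linarith
    qed
    have Mx: "Max (h ` Y) \<le> (\<Sum>y\<in>Y. G y w)" using finY Yne hS by auto
    obtain y1 where "y1 \<in> Y" using Yne by auto
    then have "Max (h ` Y) \<ge> h y1" using finY by (intro Max_ge) auto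
    then have M0: "Max (h ` Y) \<ge> 0" using h0[of y1] by linarith
    have "F w \<le> Max (h ` Y)" using M0 by (simp add: F_def h_def[abs_def])
    then show ?thesis using Mx by linarith
  qed
  have AEdom: "AE w in rand_model. ennreal (F w) \<le> ennreal (\<Sum>y\<in>Y. G y w)"
    using AE_good by eventually_elim (rule ennreal_leI[OF dom])
  have K0: "K1 > 0" by (simp add: K1_def)
  have "(\<integral>\<^sup>+w. ennreal (F w) \<partial>rand_model) \<le> (\<integral>\<^sup>+w. ennreal (\<Sum>y\<in>Y. G y w) \<partial>rand_model)"
    by (rule nn_integral_mono_AE[OF AEdom])
  also have "\<dots> = (\<integral>\<^sup>+w. (\<Sum>y\<in>Y. ennreal (G y w)) \<partial>rand_model)"
    by (intro nn_integral_cong) (simp add: sum_ennreal Gnn)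
  also have "\<dots> = (\<Sum>y\<in>Y. \<integral>\<^sup>+w. ennreal (G y w) \<partial>rand_model)"
  proof (rule nn_integral_sum)
    fix y assume "y \<in> Y"
    then have "ln y > 0" using Yel exp_gt_zero[of 1] by (meson less_le_trans)
    then have c0: "1 / (ln y * L^10) \<ge> 0" using L0 by simp
    show "(\<lambda>w. ennreal (G y w)) \<in> borel_measurable rand_model"
      unfolding G_def rand_model_def by (rule meas_prod[OF finite_PP PP_sub phi_nonneg c0])
  qed
  also have "\<dots> \<le> (\<Sum>y\<in>Y. ennreal (K1 / L^10))"
  proof (rule sum_mono)
    fix y assume "y \<in> Y"
    show "(\<integral>\<^sup>+w. ennreal (G y w) \<partial>rand_model) \<le> ennreal (K1 / L^10)"
      unfolding G_def by (rule per_y[OF Yel(1,2)[OF \<open>y \<in> Y\<close>] L1])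
  qed
  also have "\<dots> = ennreal (real (card Y) * (K1 / L^10))"
    by (subst ennreal_mult) (use K0 L0 in \<open>auto simp: ennreal_of_nat_eq_real_of_nat\<close>)
  also have "\<dots> \<le> ennreal ((2 / ln 2 + 1) * K1 / L^9)"
  proof (rule ennreal_leI)
    have "real (card Y) \<le> (2 / ln 2 + 1) * L"
    proof -
      have "2 * sqrt L / ln 2 \<le> 2 * L / ln 2" using sqL l2 by (simp add: divide_right_mono)
      then show ?thesis using cardY L1 by (simp add: algebra_simps)
    qed
    then have "real (card Y) * (K1 / L^10) \<le> (2 / ln 2 + 1) * L * (K1 / L^10)"
      using K0 L0 by (intro mult_right_mono) auto
    also have "\<dots> = (2 / ln 2 + 1) * K1 / L^9"
    proof -
      have p10: "L^10 = L * L^9" by (simp add: eval_nat_numeral)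
      show ?thesis unfolding p10 using L0 by (simp add: field_simps)
    qed
    finally show "real (card Y) * (K1 / L^10) \<le> (2 / ln 2 + 1) * K1 / L^9" .
  qed
  finally have nn: "(\<integral>\<^sup>+w. ennreal (F w) \<partial>rand_model) \<le> ennreal ((2 / ln 2 + 1) * K1 / L^9)" .
  have C0: "0 \<le> (2 / ln 2 + 1) * K1 / L^9" using K0 L0 l2 by simp
  have "integral\<^sup>L rand_model F \<le> (2 / ln 2 + 1) * K1 / L^9"
    by (rule integral_real_bounded[OF C0 nn])
  then show ?thesis by (simp only: F_def[abs_def] Y_def L_def)
qed

theorem proposition3p2:
  fixes \<epsilon> :: real
  assumes "\<epsilon> > 0"
  shows "\<exists>C X0. \<forall>x \<ge> X0. \<forall>r :: nat.
           (1 + \<epsilon>) * Log2 x \<le> real r \<and> real r \<le> (2 - \<epsilon>) * Log2 x \<longrightarrow>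
           (let \<alpha> = real r / Log2 x - 1 in
            (\<integral>w. (if omega (n_below w x) = r then 1 else 0) *
                   Max ((\<lambda>y. real (tau (n_below w y)) / Log y *
                              (if \<not> E_event x y w then 1 else 0)) ` Yset x \<alpha>)
             \<partial>rand_model)
            \<le> C / (Log2 x) ^ 9)"
proof -
  define M where "M = max 4 (4 / \<epsilon>^2)"
  have M4: "M \<ge> 4" by (simp add: M_def)
  have Me: "M \<ge> 4 / \<epsilon>^2" by (simp add: M_def)
  have LM: "Log2 x \<ge> M" if "x \<ge> exp (exp M)" for x
  proof -
    have "exp (exp M) > 0" by simp
    then have x0: "x > 0" using that by linarith
    have "ln x \<ge> exp M" using that x0 by (simp add: ln_ge_iff)
    then have "Log x \<ge> exp M" by (simp add: Log_def)
    moreover have "Log x > 0" using Log_ge1[of x] by linarith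
    ultimately have "ln (Log x) \<ge> M" by (simp add: ln_ge_iff)
    then show ?thesis by (simp add: Log2_def Log_def)
  qed
  show ?thesis
  proof (intro exI allI impI)
    fix x :: real and r :: nat
    assume x: "x \<ge> exp (exp M)"
      and r: "(1 + \<epsilon>) * Log2 x \<le> real r \<and> real r \<le> (2 - \<epsilon>) * Log2 x"
    define L where "L = Log2 x"
    have LM': "L \<ge> M" using LM[OF x] by (simp add: L_def)
    have L0: "L > 0" using LM' M4 by linarith
    define \<alpha> where "\<alpha> = real r / L - 1"
    have ae: "\<alpha> \<ge> \<epsilon>"
    proof -
      have "(1 + \<epsilon>) * L \<le> real r" using r by (simp add: L_def)
      then have "1 + \<epsilon> \<le> real r / L" using L0 by (simp add: pos_le_divide_eq)
      then show ?thesis by (simp add: \<alpha>_def)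
    qed
    have sq: "sqrt L \<ge> 2 / \<epsilon>"
    proof -
      have "L \<ge> (2 / \<epsilon>)^2" using LM' Me by (simp add: power_divide)
      then have "sqrt L \<ge> sqrt ((2 / \<epsilon>)^2)" by (rule real_sqrt_le_mono)
      then show ?thesis using assms by simp
    qed
    have sq2: "sqrt L \<ge> 2"
    proof -
      have "sqrt L \<ge> sqrt 4" using LM' M4 by (intro real_sqrt_le_mono) linarith
      then show ?thesis by simp
    qed
    have aL: "\<alpha> * L - sqrt L \<ge> 2"
    proof -
      have "\<epsilon> * sqrt L \<ge> 2" using sq assms by (simp add: divide_le_eq mult.commute)
      then have "\<epsilon> * sqrt L * sqrt L \<ge> 2 * sqrt L" using sq2 L0 by (intro mult_right_mono) auto
      then have "\<epsilon> * L \<ge> 2 * sqrt L" using L0 by (simp add: mult.assoc)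
      moreover have "\<alpha> * L \<ge> \<epsilon> * L" using ae L0 by (intro mult_right_mono) auto
      ultimately show ?thesis using sq2 by linarith
    qed
    have "(\<integral>w. (if omega (n_below w x) = r then 1 else 0) *
                   Max ((\<lambda>y. real (tau (n_below w y)) / Log y *
                              (if \<not> E_event x y w then 1 else 0)) ` Yset x \<alpha>)
             \<partial>rand_model) \<le> (2 / ln 2 + 1) * K1 / (Log2 x) ^ 9"
      by (rule main_bound) (use LM' M4 aL in \<open>simp_all add: L_def\<close>)
    then show "let \<alpha> = real r / Log2 x - 1 in
            (\<integral>w. (if omega (n_below w x) = r then 1 else 0) *
                   Max ((\<lambda>y. real (tau (n_below w y)) / Log y *
                              (if \<not> E_event x y w then 1 else 0)) ` Yset x \<alpha>)
             \<partial>rand_model)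
            \<le> (2 / ln 2 + 1) * K1 / (Log2 x) ^ 9"
      by (simp add: Let_def \<alpha>_def L_def)
  qed
qed

end
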